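(* Let $R$ be a ring with a set of local units $E$ and let $E'\subseteq E$ be closed under joins $e_1\vee e_2=e_1+e_2-e_1e_2$ and meets $e_1\wedge e_2=e_1e_2$, ordered by $e_i\le e_j\iff e_ie_j=e_i$. For $e_i\le e_j$ let $\varphi_{ij}:Re_i\hookrightarrow Re_j$ be the inclusion, $\psi_{ji}:Re_j\to Re_i$, $m\mapsto me_i$, and $\phi_{ij}:\mathrm{End}_R(Re_i)^{\mathrm{op}}\to\mathrm{End}_R(Re_j)^{\mathrm{op}}$, $f\mapsto\varphi_{ij}\circ f\circ\psi_{ji}$; let $h_{ij}:e_iRe_i\hookrightarrow e_jRe_j$ be the inclusion. Then the directed systems $\langle\{\mathrm{End}_R(Re_i)^{\mathrm{op}}\}_{e_i\in E'},\{\phi_{ij}\}\rangle$ and $\langle\{e_iRe_i\}_{e_i\in E'},\{h_{ij}\}\rangle$ are isomorphic (via $f\mapsto f(e_i)$), and consequently $\varinjlim_{e_i\in E'}\mathrm{End}_R(Re_i)^{\mathrm{op}}\cong\bigcup_{e_i\in E'}e_iRe_i$ as rings with local units.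
   Context: A ring with local units is a ring $R$ with a set $E$ of pairwise commuting idempotents such that $R=\bigcup_{e\in E}eRe$. $\mathrm{End}_R(M)$ is the ring of left $R$-module endomorphisms with multiplication given by composition, and $^{\mathrm{op}}$ denotes the opposite ring. *)

theory Defs
  imports Main
begin

text \<open>Rings are (possibly non-unital) rings given by the type class ring; the whole ring R
is the universe of the type.\<close>

definition corner :: "'a::ring \<Rightarrow> 'a set" where
  "corner e = {e * r * e | r. True}"

definition lmod :: "'a::ring \<Rightarrow> 'a set" where
  "lmod e = {r * e | r. True}"

definition local_units :: "'a::ring set \<Rightarrow> bool" where
  "local_units E \<longleftrightarrow> (\<forall>e\<in>E. e * e = e) \<and> (\<forall>e\<in>E. \<forall>f\<in>E. e * f = f * e)
     \<and> (\<forall>x. \<exists>e\<in>E. x \<in> corner e)"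

definition ljoin :: "'a::ring \<Rightarrow> 'a \<Rightarrow> 'a" where
  "ljoin e1 e2 = e1 + e2 - e1 * e2"

definition lmeet :: "'a::ring \<Rightarrow> 'a \<Rightarrow> 'a" where
  "lmeet e1 e2 = e1 * e2"

definition lle :: "'a::ring \<Rightarrow> 'a \<Rightarrow> bool" where
  "lle e1 e2 \<longleftrightarrow> e1 * e2 = e1"

text \<open>End_R(Re): left R-module endomorphisms of Re, extended by 0 outside Re.\<close>
definition endo :: "'a::ring \<Rightarrow> ('a \<Rightarrow> 'a) set" where
  "endo e = {f. (\<forall>x\<in>lmod e. f x \<in> lmod e)
      \<and> (\<forall>x\<in>lmod e. \<forall>y\<in>lmod e. f (x + y) = f x + f y)
      \<and> (\<forall>r. \<forall>x\<in>lmod e. f (r * x) = r * f x)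
      \<and> (\<forall>x. x \<notin> lmod e \<longrightarrow> f x = 0)}"

definition endo_add :: "('a::ring \<Rightarrow> 'a) \<Rightarrow> ('a \<Rightarrow> 'a) \<Rightarrow> 'a \<Rightarrow> 'a" where
  "endo_add f g = (\<lambda>x. f x + g x)"

definition endo_opmult :: "('a::ring \<Rightarrow> 'a) \<Rightarrow> ('a \<Rightarrow> 'a) \<Rightarrow> 'a \<Rightarrow> 'a" where
  "endo_opmult f g = g \<circ> f"

definition endo_id :: "'a::ring \<Rightarrow> 'a \<Rightarrow> 'a" where
  "endo_id e = (\<lambda>x. if x \<in> lmod e then x else 0)"

text \<open>phi_ij f = varphi_ij \<circ> f \<circ> psi_ji (inclusion after f after right multiplication by e_i),
  extended by 0 outside Re_j.\<close>
definition phi :: "'a::ring \<Rightarrow> 'a \<Rightarrow> ('a \<Rightarrow> 'a) \<Rightarrow> 'a \<Rightarrow> 'a" where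
  "phi ei ej f = (\<lambda>x. if x \<in> lmod ej then f (x * ei) else 0)"

definition dl_rel :: "'a::ring set \<Rightarrow> (('a \<times> ('a \<Rightarrow> 'a)) \<times> ('a \<times> ('a \<Rightarrow> 'a))) set" where
  "dl_rel E' = {((i, f), (j, g)). i \<in> E' \<and> j \<in> E' \<and> f \<in> endo i \<and> g \<in> endo j \<and>
       (\<exists>k\<in>E'. lle i k \<and> lle j k \<and> phi i k f = phi j k g)}"

definition dl_carrier :: "'a::ring set \<Rightarrow> ('a \<times> ('a \<Rightarrow> 'a)) set set" where
  "dl_carrier E' = (SIGMA i:E'. endo i) // dl_rel E'"

definition dl_class :: "'a::ring set \<Rightarrow> 'a \<Rightarrow> ('a \<Rightarrow> 'a) \<Rightarrow> ('a \<times> ('a \<Rightarrow> 'a)) set" where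
  "dl_class E' i f = dl_rel E' `` {(i, f)}"

definition dl_add :: "'a::ring set \<Rightarrow> ('a \<times> ('a \<Rightarrow> 'a)) set \<Rightarrow> ('a \<times> ('a \<Rightarrow> 'a)) set
     \<Rightarrow> ('a \<times> ('a \<Rightarrow> 'a)) set" where
  "dl_add E' X Y = (let (i, f) = (SOME p. p \<in> X); (j, g) = (SOME q. q \<in> Y); k = ljoin i j
      in dl_class E' k (endo_add (phi i k f) (phi j k g)))"

definition dl_mult :: "'a::ring set \<Rightarrow> ('a \<times> ('a \<Rightarrow> 'a)) set \<Rightarrow> ('a \<times> ('a \<Rightarrow> 'a)) set
     \<Rightarrow> ('a \<times> ('a \<Rightarrow> 'a)) set" where
  "dl_mult E' X Y = (let (i, f) = (SOME p. p \<in> X); (j, g) = (SOME q. q \<in> Y); k = ljoin i j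
      in dl_class E' k (endo_opmult (phi i k f) (phi j k g)))"

end

theory Submission
  imports Defs
begin

lemma lmod_iff: fixes i :: "'a::ring" assumes "i*i=i" shows "x \<in> lmod i \<longleftrightarrow> x*i = x"
proof
  assume "x \<in> lmod i" then obtain r where "x = r*i" by (auto simp: lmod_def)
  then show "x*i = x" using assms by (simp add: mult.assoc)
next
  assume "x*i = x" then show "x \<in> lmod i" unfolding lmod_def by (metis (mono_tags, lifting) mem_Collect_eq)
qed

lemma corner_iff: fixes i :: "'a::ring" assumes "i*i=i" shows "c \<in> corner i \<longleftrightarrow> i*c = c \<and> c*i = c"
proof
  assume "c \<in> corner i" then obtain r where c: "c = i*r*i" by (auto simp: corner_def)
  have "i*c = (i*i)*r*i" by (simp add: c mult.assoc)
  moreover have "c*i = i*r*(i*i)" by (simp add: c mult.assoc)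
  ultimately show "i*c = c \<and> c*i = c" using assms c by simp
next
  assume "i*c = c \<and> c*i = c" then have "c = i*c*i" by simp
  then show "c \<in> corner i" unfolding corner_def by blast
qed

definition mk :: "'a::ring \<Rightarrow> 'a \<Rightarrow> 'a \<Rightarrow> 'a" where
  "mk k c = (\<lambda>x. if x \<in> lmod k then x*c else 0)"

lemma endo_lin: fixes i :: "'a::ring" assumes "i*i=i" "f \<in> endo i" "x \<in> lmod i"
  shows "f x = x * f i"
proof -
  have "i \<in> lmod i" using assms(1) lmod_iff by blast
  then have "f (x*i) = x * f i" using assms(2) by (simp add: endo_def)
  then show ?thesis using assms lmod_iff by metis
qed

lemma endo_corner: fixes i :: "'a::ring" assumes "i*i=i" "f \<in> endo i"
  shows "f i \<in> corner i"
proof -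
  have ii: "i \<in> lmod i" using assms(1) lmod_iff by blast
  then have "f i \<in> lmod i" using assms(2) by (simp add: endo_def)
  then have 1: "f i * i = f i" using assms(1) lmod_iff by blast
  have "f (i*i) = i * f i" using assms(2) ii by (simp add: endo_def)
  then show ?thesis using 1 assms(1) corner_iff by metis
qed

lemma endo_mk: fixes i :: "'a::ring" assumes "i*i=i" "f \<in> endo i"
  shows "f = mk i (f i)"
proof
  fix x show "f x = mk i (f i) x"
    using endo_lin[OF assms] assms(2) by (auto simp: mk_def endo_def)
qed

lemma mk_endo: fixes i :: "'a::ring" assumes "i*i=i" "c \<in> corner i"
  shows "mk i c \<in> endo i" "mk i c i = c"
proof -
  have c: "i*c = c" "c*i = c" using assms corner_iff by blast+
  have lm: "x \<in> lmod i \<Longrightarrow> x*c \<in> lmod i" for x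
    using c assms(1) lmod_iff by (metis mult.assoc)
  have lr: "x \<in> lmod i \<Longrightarrow> r*x \<in> lmod i" for x r
    using assms(1) lmod_iff by (metis mult.assoc)
  have la: "x \<in> lmod i \<Longrightarrow> y \<in> lmod i \<Longrightarrow> x+y \<in> lmod i" for x y
    using assms(1) lmod_iff by (metis distrib_right)
  show "mk i c \<in> endo i" unfolding endo_def mk_def
    using lm lr la by (auto simp: distrib_right mult.assoc)
  have "i \<in> lmod i" using assms(1) lmod_iff by blast
  then show "mk i c i = c" using c by (simp add: mk_def)
qed

lemma mk_add: fixes i :: "'a::ring" 
  shows "endo_add (mk i a) (mk i b) = mk i (a+b)"
  by (auto simp: endo_add_def mk_def distrib_left)

lemma mk_mult: fixes i :: "'a::ring" assumes "i*i=i" "a \<in> corner i"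
  shows "endo_opmult (mk i a) (mk i b) = mk i (a*b)"
proof
  fix x
  have c: "a*i = a" using assms corner_iff by blast
  have "x \<in> lmod i \<Longrightarrow> x*a \<in> lmod i" using c assms(1) lmod_iff by (metis mult.assoc)
  moreover have "0 \<in> lmod i" using assms(1) lmod_iff[of i 0] by simp
  ultimately show "endo_opmult (mk i a) (mk i b) x = mk i (a*b) x"
    by (auto simp: endo_opmult_def mk_def mult.assoc)
qed

lemma corner_sub: fixes i k :: "'a::ring" assumes "i*i=i" "k*k = k" "i*k = i" "k*i = i" "c \<in> corner i"
  shows "c \<in> corner k"
proof -
  have c: "i*c = c" "c*i = c" using assms corner_iff by blast+
  have "k*c = c" by (metis c(1) assms(4) mult.assoc)
  moreover have "c*k = c" by (metis c(2) assms(3) mult.assoc)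
  ultimately show ?thesis using assms(2) corner_iff by blast
qed

lemma phi_mk: fixes i k :: "'a::ring" assumes "i*i=i" "k*k = k" "i*k = i" "k*i = i" "f \<in> endo i"
  shows "phi i k f = mk k (f i)"
proof
  fix x
  have "x*i \<in> lmod i" using assms(1) lmod_iff by (metis mult.assoc)
  then have "f (x*i) = x * i * f i" using endo_lin assms by blast
  also have "\<dots> = x * f i" using endo_corner[OF assms(1,5)] corner_iff[OF assms(1)] by (metis mult.assoc)
  finally show "phi i k f x = mk k (f i) x" by (simp add: phi_def mk_def)
qed

theorem theorem3p13:
  fixes E E' :: "'a::ring set"
  assumes "local_units E"
    and "E' \<subseteq> E"
    and "\<forall>a\<in>E'. \<forall>b\<in>E'. ljoin a b \<in> E' \<and> lmeet a b \<in> E'"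
  shows "(\<forall>i\<in>E'.
            bij_betw (\<lambda>f. f i) (endo i) (corner i)
          \<and> (\<forall>f\<in>endo i. \<forall>g\<in>endo i. endo_add f g i = f i + g i)
          \<and> (\<forall>f\<in>endo i. \<forall>g\<in>endo i. endo_opmult f g i = f i * g i))
       \<and> (\<forall>i\<in>E'. \<forall>j\<in>E'. lle i j \<longrightarrow> (\<forall>f\<in>endo i. phi i j f \<in> endo j \<and> phi i j f j = f i))
       \<and> (\<exists>\<Phi>. bij_betw \<Phi> (dl_carrier E') (\<Union>i\<in>E'. corner i)
          \<and> (\<forall>X\<in>dl_carrier E'. \<forall>Y\<in>dl_carrier E'.
               \<Phi> (dl_add E' X Y) = \<Phi> X + \<Phi> Y \<and> \<Phi> (dl_mult E' X Y) = \<Phi> X * \<Phi> Y)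
          \<and> (\<forall>i\<in>E'. \<Phi> (dl_class E' i (endo_id i)) = i))"
proof -
  have idem: "e*e = e" if "e \<in> E'" for e using assms(1,2) that unfolding local_units_def by blast
  have comm: "a*b = b*a" if "a \<in> E'" "b \<in> E'" for a b using assms(1,2) that unfolding local_units_def by blast
  have join: "ljoin i j \<in> E' \<and> i * ljoin i j = i \<and> ljoin i j * i = i \<and> j * ljoin i j = j \<and> ljoin i j * j = j"
    if ij: "i \<in> E'" "j \<in> E'" for i j
  proof -
    have kE: "ljoin i j \<in> E'" using assms(3) ij by blast
    have a1: "i*(i*j) = i*j" using idem[OF ij(1)] by (metis mult.assoc)
    have a2: "j*(i*j) = i*j" using idem[OF ij(2)] comm[OF ij] by (metis mult.assoc)
    have "i * ljoin i j = i" unfolding ljoin_def using a1 idem[OF ij(1)] by (simp add: algebra_simps)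
    moreover have "j * ljoin i j = j" unfolding ljoin_def using a2 idem[OF ij(2)] comm[OF ij] by (simp add: algebra_simps)
    ultimately show ?thesis using kE comm[OF kE ij(1)] comm[OF kE ij(2)] by simp
  qed
  have P1: "\<forall>i\<in>E'.
            bij_betw (\<lambda>f. f i) (endo i) (corner i)
          \<and> (\<forall>f\<in>endo i. \<forall>g\<in>endo i. endo_add f g i = f i + g i)
          \<and> (\<forall>f\<in>endo i. \<forall>g\<in>endo i. endo_opmult f g i = f i * g i)"
  proof (rule ballI, intro conjI)
    fix i assume i: "i \<in> E'"
    note id = idem[OF i]
    show "bij_betw (\<lambda>f. f i) (endo i) (corner i)"
      unfolding bij_betw_def
    proof (intro conjI)
      show "inj_on (\<lambda>f. f i) (endo i)"
        by (rule inj_onI) (metis endo_mk[OF id])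
      show "(\<lambda>f. f i) ` endo i = corner i"
      proof
        show "(\<lambda>f. f i) ` endo i \<subseteq> corner i" using endo_corner[OF id] by blast
        show "corner i \<subseteq> (\<lambda>f. f i) ` endo i"
        proof
          fix c assume "c \<in> corner i"
          then show "c \<in> (\<lambda>f. f i) ` endo i" using mk_endo[OF id] by (metis image_eqI)
        qed
      qed
    qed
    show "\<forall>f\<in>endo i. \<forall>g\<in>endo i. endo_add f g i = f i + g i" by (simp add: endo_add_def)
    show "\<forall>f\<in>endo i. \<forall>g\<in>endo i. endo_opmult f g i = f i * g i"
    proof (intro ballI)
      fix f g assume f: "f \<in> endo i" and g: "g \<in> endo i"
      have "f i \<in> lmod i" using endo_corner[OF id f] corner_iff[OF id] lmod_iff[OF id] by blast
      then show "endo_opmult f g i = f i * g i" using endo_lin[OF id g] by (simp add: endo_opmult_def)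
    qed
  qed
  have P2: "\<forall>i\<in>E'. \<forall>j\<in>E'. lle i j \<longrightarrow> (\<forall>f\<in>endo i. phi i j f \<in> endo j \<and> phi i j f j = f i)"
  proof (intro ballI impI)
    fix i j f assume i: "i \<in> E'" and j: "j \<in> E'" and l: "lle i j" and f: "f \<in> endo i"
    have ij: "i*j = i" "j*i = i" using l comm[OF i j] by (auto simp: lle_def)
    have c: "f i \<in> corner j" using corner_sub[OF idem[OF i] idem[OF j] ij endo_corner[OF idem[OF i] f]] .
    show "phi i j f \<in> endo j \<and> phi i j f j = f i"
      using phi_mk[OF idem[OF i] idem[OF j] ij f] mk_endo[OF idem[OF j] c] by simp
  qed
  define S where "S = (SIGMA i:E'. endo i)"
  define val :: "'a \<times> ('a \<Rightarrow> 'a) \<Rightarrow> 'a" where "val p = snd p (fst p)" for p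
  define \<Phi> where "\<Phi> X = val (SOME p. p \<in> X)" for X
  have relc: "((i,f),(j,g)) \<in> dl_rel E' \<longleftrightarrow> (i,f) \<in> S \<and> (j,g) \<in> S \<and> f i = g j" for i f j g
  proof
    assume "((i,f),(j,g)) \<in> dl_rel E'"
    then obtain k where i: "i \<in> E'" and j: "j \<in> E'" and f: "f \<in> endo i" and g: "g \<in> endo j"
      and k: "k \<in> E'" "lle i k" "lle j k" and e: "phi i k f = phi j k g"
      unfolding dl_rel_def by blast
    have ik: "i*k = i" "k*i = i" using k comm[OF i k(1)] by (auto simp: lle_def)
    have jk: "j*k = j" "k*j = j" using k comm[OF j k(1)] by (auto simp: lle_def)
    have "phi i k f k = f i" using P2 i k f by blast
    moreover have "phi j k g k = g j" using P2 j k g by blast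
    ultimately show "(i,f) \<in> S \<and> (j,g) \<in> S \<and> f i = g j" using e i j f g by (simp add: S_def)
  next
    assume a: "(i,f) \<in> S \<and> (j,g) \<in> S \<and> f i = g j"
    then have i: "i \<in> E'" and j: "j \<in> E'" and f: "f \<in> endo i" and g: "g \<in> endo j"
      by (auto simp: S_def)
    define k where "k = ljoin i j"
    have k: "k \<in> E'" "i*k = i" "k*i = i" "j*k = j" "k*j = j" using join[OF i j] k_def by auto
    have "phi i k f = phi j k g"
      using phi_mk[OF idem[OF i] idem[OF k(1)] k(2,3) f] phi_mk[OF idem[OF j] idem[OF k(1)] k(4,5) g] a
      by simp
    then show "((i,f),(j,g)) \<in> dl_rel E'"
      unfolding dl_rel_def using i j f g k by (auto simp: lle_def)
  qed
  have cls: "dl_rel E' `` {p} = {q \<in> S. val q = val p}" if "p \<in> S" for p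
    using that relc by (cases p) (auto simp: val_def)
  have Phicls: "\<Phi> (dl_rel E' `` {p}) = val p" if "p \<in> S" for p
  proof -
    have "p \<in> dl_rel E' `` {p}" using cls[OF that] that by simp
    then have "(SOME q. q \<in> dl_rel E' `` {p}) \<in> dl_rel E' `` {p}" by (rule someI)
    then show ?thesis using cls[OF that] by (simp add: \<Phi>_def)
  qed
  have carr: "X \<in> dl_carrier E' \<longleftrightarrow> (\<exists>p\<in>S. X = dl_rel E' `` {p})" for X
    unfolding dl_carrier_def S_def quotient_def by blast
  have some: "(SOME p. p \<in> X) \<in> S \<and> X = dl_rel E' `` {SOME p. p \<in> X}" if Xc: "X \<in> dl_carrier E'" for X
  proof -
    define q0 where "q0 = (SOME p. p \<in> X)"
    obtain p where p: "p \<in> S" "X = dl_rel E' `` {p}" using carr[of X] Xc by blast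
    have X: "X = {q \<in> S. val q = val p}" using p(2) cls[OF p(1)] by simp
    then have "p \<in> X" using p(1) by simp
    then have q: "q0 \<in> X" unfolding q0_def by (rule someI)
    then have qS: "q0 \<in> S" and vq: "val q0 = val p" using X by simp_all
    have "dl_rel E' `` {q0} = X" unfolding cls[OF qS] X vq ..
    then show ?thesis using qS unfolding q0_def by simp
  qed
  have valS: "val p \<in> corner (fst p)" if "p \<in> S" for p
  proof -
    obtain i f where p: "p = (i,f)" by fastforce
    have "i \<in> E'" "f \<in> endo i" using that p by (auto simp: S_def)
    then show ?thesis using p endo_corner[OF idem] by (simp add: val_def)
  qed
  have P3bij: "bij_betw \<Phi> (dl_carrier E') (\<Union>i\<in>E'. corner i)"
    unfolding bij_betw_def
  proof (intro conjI)
    show "inj_on \<Phi> (dl_carrier E')"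
    proof (rule inj_onI)
      fix X Y assume X: "X \<in> dl_carrier E'" and Y: "Y \<in> dl_carrier E'" and e: "\<Phi> X = \<Phi> Y"
      obtain p where p: "p \<in> S" "X = dl_rel E' `` {p}" using carr[of X] X by blast
      obtain q where q: "q \<in> S" "Y = dl_rel E' `` {q}" using carr[of Y] Y by blast
      have "val p = val q" using e p q Phicls by simp
      then show "X = Y" using p q cls by simp
    qed
    show "\<Phi> ` dl_carrier E' = (\<Union>i\<in>E'. corner i)"
    proof
      show "\<Phi> ` dl_carrier E' \<subseteq> (\<Union>i\<in>E'. corner i)"
      proof
        fix c assume "c \<in> \<Phi> ` dl_carrier E'"
        then obtain X where X: "X \<in> dl_carrier E'" "c = \<Phi> X" by blast
        then obtain p where p: "p \<in> S" "c = \<Phi> (dl_rel E' `` {p})" using carr[of X] by blast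
        then have "c = val p" using Phicls by simp
        then show "c \<in> (\<Union>i\<in>E'. corner i)" using valS[OF p(1)] p(1) by (auto simp: S_def)
      qed
      show "(\<Union>i\<in>E'. corner i) \<subseteq> \<Phi> ` dl_carrier E'"
      proof
        fix c assume "c \<in> (\<Union>i\<in>E'. corner i)"
        then obtain i where i: "i \<in> E'" "c \<in> corner i" by blast
        have p: "(i, mk i c) \<in> S" using mk_endo[OF idem[OF i(1)] i(2)] i by (simp add: S_def)
        have "\<Phi> (dl_rel E' `` {(i, mk i c)}) = c"
          using Phicls[OF p] mk_endo[OF idem[OF i(1)] i(2)] by (simp add: val_def)
        moreover have "dl_rel E' `` {(i, mk i c)} \<in> dl_carrier E'" using carr[of "dl_rel E' `` {(i, mk i c)}"] p by blast
        ultimately show "c \<in> \<Phi> ` dl_carrier E'" by (metis image_eqI)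
      qed
    qed
  qed
  have P3ops: "\<forall>X\<in>dl_carrier E'. \<forall>Y\<in>dl_carrier E'.
               \<Phi> (dl_add E' X Y) = \<Phi> X + \<Phi> Y \<and> \<Phi> (dl_mult E' X Y) = \<Phi> X * \<Phi> Y"
  proof (intro ballI)
    fix X Y assume X: "X \<in> dl_carrier E'" and Y: "Y \<in> dl_carrier E'"
    obtain i f where if_: "(SOME p. p \<in> X) = (i,f)" by fastforce
    obtain j g where jg: "(SOME p. p \<in> Y) = (j,g)" by fastforce
    have iS: "(i,f) \<in> S" using some[OF X] if_ by simp
    have jS: "(j,g) \<in> S" using some[OF Y] jg by simp
    have i: "i \<in> E'" and f: "f \<in> endo i" using iS by (auto simp: S_def)
    have j: "j \<in> E'" and g: "g \<in> endo j" using jS by (auto simp: S_def)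
    have PX: "\<Phi> X = f i" using if_ by (simp add: \<Phi>_def val_def)
    have PY: "\<Phi> Y = g j" using jg by (simp add: \<Phi>_def val_def)
    define k where "k = ljoin i j"
    have k: "k \<in> E'" "i*k = i" "k*i = i" "j*k = j" "k*j = j" using join[OF i j] k_def by auto
    have idk: "k*k = k" using idem k by blast
    have fc: "f i \<in> corner k" using corner_sub[OF idem[OF i] idk k(2,3) endo_corner[OF idem[OF i] f]] .
    have gc: "g j \<in> corner k" using corner_sub[OF idem[OF j] idk k(4,5) endo_corner[OF idem[OF j] g]] .
    have pf: "phi i k f = mk k (f i)" using phi_mk[OF idem[OF i] idk k(2,3) f] .
    have pg: "phi j k g = mk k (g j)" using phi_mk[OF idem[OF j] idk k(4,5) g] .
    have addc: "f i + g j \<in> corner k" using fc gc corner_iff[OF idk] by (simp add: distrib_left distrib_right)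
    have mulc: "f i * g j \<in> corner k" using fc gc corner_iff[OF idk] by (metis mult.assoc)
    have A: "dl_add E' X Y = dl_rel E' `` {(k, mk k (f i + g j))}"
      unfolding dl_add_def if_ jg Let_def using pf pg k_def by (simp add: mk_add dl_class_def)
    have M: "dl_mult E' X Y = dl_rel E' `` {(k, mk k (f i * g j))}"
      unfolding dl_mult_def if_ jg Let_def using pf pg k_def mk_mult[OF idk fc] by (simp add: dl_class_def)
    have aS: "(k, mk k (f i + g j)) \<in> S" using mk_endo[OF idk addc] k by (simp add: S_def)
    have mS: "(k, mk k (f i * g j)) \<in> S" using mk_endo[OF idk mulc] k by (simp add: S_def)
    show "\<Phi> (dl_add E' X Y) = \<Phi> X + \<Phi> Y \<and> \<Phi> (dl_mult E' X Y) = \<Phi> X * \<Phi> Y"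
      using Phicls[OF aS] Phicls[OF mS] A M PX PY mk_endo(2)[OF idk addc] mk_endo(2)[OF idk mulc]
      by (simp add: val_def)
  qed
  have P3id: "\<forall>i\<in>E'. \<Phi> (dl_class E' i (endo_id i)) = i"
  proof
    fix i assume i: "i \<in> E'"
    have ic: "i \<in> corner i" using idem[OF i] corner_iff[OF idem[OF i]] by simp
    have "endo_id i = mk i i" by (auto simp: endo_id_def mk_def lmod_iff[OF idem[OF i]])
    then show "\<Phi> (dl_class E' i (endo_id i)) = i"
      using Phicls[of "(i, mk i i)"] mk_endo[OF idem[OF i] ic] i by (simp add: dl_class_def S_def val_def)
  qed
  show ?thesis using P1 P2 P3bij P3ops P3id by blast
qed

end
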